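(* Let $\kappa$ be a regular uncountable cardinal, let $J$ be a $\kappa$-complete ideal on $\kappa$ with $NS_\kappa \subseteq J$, and let $\eta$ be an infinite ordinal less than $Depth([\kappa]^\kappa, \searrow)$ (respectively, less than $Depth([\kappa]^\kappa, \nearrow)$). Suppose that $\clubsuit^{\rm ev}_\kappa[J]$ holds. Then there exists a descending (respectively, ascending) $(J, I_\kappa)$-tower of length $\eta$.
   Context: An ideal on $\kappa$ is a nonempty $J \subseteq P(\kappa)$ with $\kappa \notin J$, every bounded subset of $\kappa$ in $J$, $J$ closed under subsets and under unions of two members. $J^+ = P(\kappa)\setminus J$. $J$ is $\kappa$-complete if the union of fewer than $\kappa$ members of $J$ is in $J$. $I_\kappa$ is the ideal of bounded subsets of $\kappa$, $NS_\kappa$ the nonstationary ideal, $[\kappa]^\kappa$ the set of subsets of $\kappa$ of size $\kappa$, and $acc(\kappa)$ the set of nonzero limit ordinals below $\kappa$. $\clubsuit^{\rm ev}_\kappa[J]$ asserts the existence of $s_\alpha \subseteq \alpha$ with $\sup s_\alpha = \alpha$ for $\alpha \in acc(\kappa)$ such that $\{\alpha \in acc(\kappa) : \exists \beta < \alpha\, (s_\alpha \setminus \beta \subseteq A)\} \in J^+$ for all $A \in [\kappa]^\kappa$. For an ideal $J$ on $\kappa$, $Y \subseteq P(\kappa)$ and an ordinal $\delta$, a descending (respectively, ascending) $(J,Y)$-tower of length $\delta$ is a sequence $\langle A_\alpha : \alpha < \delta\rangle$ with each $A_\alpha \in J^+$ such that whenever $\alpha < \beta < \delta$: $A_\beta \setminus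 A_\alpha \in Y$ and $A_\alpha \setminus A_\beta \in J^+$ (respectively, $A_\alpha \setminus A_\beta \in Y$ and $A_\beta \setminus A_\alpha \in J^+$). $Depth([\kappa]^\kappa, \nearrow)$ (respectively, $Depth([\kappa]^\kappa, \searrow)$) is the least ordinal $\eta$ such that there is no ascending (respectively, descending) $(I_\kappa, I_\kappa)$-tower of length $\eta$. *)

theory Defs
  imports Main "HOL-Library.Countable_Set"
begin

unbundle cardinal_syntax

text \<open>A cardinal kappa is represented by a cardinal order k on the type 'a
  (card_order k, so Field k = UNIV); the ordinals below kappa are the elements
  of 'a, ordered by k.\<close>

definition olt :: "'a rel \<Rightarrow> 'a \<Rightarrow> 'a \<Rightarrow> bool" where
  "olt k x y \<longleftrightarrow> (x, y) \<in> k \<and> x \<noteq> y"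

definition below :: "'a rel \<Rightarrow> 'a \<Rightarrow> 'a set" where
  "below k \<alpha> = {\<beta>. olt k \<beta> \<alpha>}"

definition bounded_in :: "'a rel \<Rightarrow> 'a set \<Rightarrow> bool" where
  "bounded_in k A \<longleftrightarrow> (\<exists>\<beta>. A \<subseteq> below k \<beta>)"

definition I_bd :: "'a rel \<Rightarrow> 'a set set" where
  "I_bd k = {A. bounded_in k A}"

text \<open>acc(kappa): nonzero limit ordinals below kappa.\<close>
definition acc :: "'a rel \<Rightarrow> 'a set" where
  "acc k = {\<alpha>. (\<exists>\<beta>. olt k \<beta> \<alpha>) \<and>
                (\<forall>\<beta>. olt k \<beta> \<alpha> \<longrightarrow> (\<exists>\<gamma>. olt k \<beta> \<gamma> \<and> olt k \<gamma> \<alpha>))}"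

definition is_ideal :: "'a rel \<Rightarrow> 'a set set \<Rightarrow> bool" where
  "is_ideal k J \<longleftrightarrow> J \<noteq> {} \<and> UNIV \<notin> J \<and>
     (\<forall>A. bounded_in k A \<longrightarrow> A \<in> J) \<and>
     (\<forall>A B. A \<in> J \<longrightarrow> B \<subseteq> A \<longrightarrow> B \<in> J) \<and>
     (\<forall>A B. A \<in> J \<longrightarrow> B \<in> J \<longrightarrow> A \<union> B \<in> J)"

definition kappa_complete :: "'a rel \<Rightarrow> 'a set set \<Rightarrow> bool" where
  "kappa_complete k J \<longleftrightarrow> (\<forall>F. F \<subseteq> J \<longrightarrow> |F| <o k \<longrightarrow> \<Union>F \<in> J)"

definition club :: "'a rel \<Rightarrow> 'a set \<Rightarrow> bool" where
  "club k C \<longleftrightarrow> (\<forall>\<alpha>. \<exists>\<beta>\<in>C. olt k \<alpha> \<beta>) \<and>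
     (\<forall>\<alpha>\<in>acc k. (\<forall>\<beta>. olt k \<beta> \<alpha> \<longrightarrow> (\<exists>\<gamma>\<in>C. olt k \<beta> \<gamma> \<and> olt k \<gamma> \<alpha>)) \<longrightarrow> \<alpha> \<in> C)"

definition stationary :: "'a rel \<Rightarrow> 'a set \<Rightarrow> bool" where
  "stationary k A \<longleftrightarrow> (\<forall>C. club k C \<longrightarrow> A \<inter> C \<noteq> {})"

definition NS :: "'a rel \<Rightarrow> 'a set set" where
  "NS k = {A. \<not> stationary k A}"

definition clubsuit_ev :: "'a rel \<Rightarrow> 'a set set \<Rightarrow> bool" where
  "clubsuit_ev k J \<longleftrightarrow> (\<exists>s :: 'a \<Rightarrow> 'a set.
     (\<forall>\<alpha>\<in>acc k. s \<alpha> \<subseteq> below k \<alpha> \<and>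
        (\<forall>\<beta>. olt k \<beta> \<alpha> \<longrightarrow> (\<exists>\<gamma>\<in>s \<alpha>. (\<beta>, \<gamma>) \<in> k))) \<and>
     (\<forall>A. |A| =o k \<longrightarrow>
        {\<alpha>\<in>acc k. \<exists>\<beta>. olt k \<beta> \<alpha> \<and> s \<alpha> - below k \<beta> \<subseteq> A} \<notin> J))"

text \<open>Towers of length eta, eta a well-order on 'b; the sequence is indexed by Field eta.
  Membership in J^+ is expressed as non-membership in J.\<close>
definition desc_tower :: "'a set set \<Rightarrow> 'a set set \<Rightarrow> 'b rel \<Rightarrow> ('b \<Rightarrow> 'a set) \<Rightarrow> bool" where
  "desc_tower J Y \<eta> A \<longleftrightarrow> (\<forall>x\<in>Field \<eta>. A x \<notin> J) \<and>
     (\<forall>x\<in>Field \<eta>. \<forall>y\<in>Field \<eta>. (x, y) \<in> \<eta> \<and> x \<noteq> y \<longrightarrow>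
        A y - A x \<in> Y \<and> A x - A y \<notin> J)"

definition asc_tower :: "'a set set \<Rightarrow> 'a set set \<Rightarrow> 'b rel \<Rightarrow> ('b \<Rightarrow> 'a set) \<Rightarrow> bool" where
  "asc_tower J Y \<eta> A \<longleftrightarrow> (\<forall>x\<in>Field \<eta>. A x \<notin> J) \<and>
     (\<forall>x\<in>Field \<eta>. \<forall>y\<in>Field \<eta>. (x, y) \<in> \<eta> \<and> x \<noteq> y \<longrightarrow>
        A x - A y \<in> Y \<and> A y - A x \<notin> J)"

text \<open>eta < Depth([kappa]^kappa, descending): since Depth is the least ordinal with no
  descending (I_kappa, I_kappa)-tower of that length, eta is below it iff every ordinal
  xi \<le> eta admits such a tower.  Every ordinal \<le> eta is represented (up to isomorphism)
  by a well-order on the same type as eta.\<close>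
definition below_depth_desc :: "'a rel \<Rightarrow> 'b rel \<Rightarrow> bool" where
  "below_depth_desc k \<eta> \<longleftrightarrow> (\<forall>\<xi> :: 'b rel. Well_order \<xi> \<longrightarrow> \<xi> \<le>o \<eta> \<longrightarrow>
      (\<exists>A :: 'b \<Rightarrow> 'a set. desc_tower (I_bd k) (I_bd k) \<xi> A))"

definition below_depth_asc :: "'a rel \<Rightarrow> 'b rel \<Rightarrow> bool" where
  "below_depth_asc k \<eta> \<longleftrightarrow> (\<forall>\<xi> :: 'b rel. Well_order \<xi> \<longrightarrow> \<xi> \<le>o \<eta> \<longrightarrow>
      (\<exists>A :: 'b \<Rightarrow> 'a set. asc_tower (I_bd k) (I_bd k) \<xi> A))"

end

theory Submission
  imports Defs
begin

definition FF :: "'a rel \<Rightarrow> ('a \<Rightarrow> 'a set) \<Rightarrow> 'a set \<Rightarrow> 'a set" where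
  "FF k s B = {\<alpha>\<in>acc k. \<exists>\<beta>. olt k \<beta> \<alpha> \<and> s \<alpha> - below k \<beta> \<subseteq> B}"

locale lin =
  fixes k :: "'a rel"
  assumes tot: "\<And>x y. (x,y) \<in> k \<or> (y,x) \<in> k"
    and antis: "\<And>x y. (x,y) \<in> k \<Longrightarrow> (y,x) \<in> k \<Longrightarrow> x = y"
    and trns: "\<And>x y z. (x,y) \<in> k \<Longrightarrow> (y,z) \<in> k \<Longrightarrow> (x,z) \<in> k"
    and rfl: "\<And>x. (x,x) \<in> k"
    and nomax: "\<And>x. \<exists>y. olt k x y"
begin

lemma olt_le: "olt k x y \<Longrightarrow> (y,z) \<in> k \<Longrightarrow> olt k x z"
  unfolding olt_def using trns antis by blast
lemma le_olt: "(x,y) \<in> k \<Longrightarrow> olt k y z \<Longrightarrow> olt k x z"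
  unfolding olt_def using trns antis by blast
lemma not_olt: "\<not> olt k x y \<Longrightarrow> (y,x) \<in> k"
  unfolding olt_def using tot rfl by blast
lemma olt_not_le: "olt k x y \<Longrightarrow> (y,x) \<notin> k"
  unfolding olt_def using antis by blast
lemma below_iff: "x \<notin> below k y \<longleftrightarrow> (y,x) \<in> k"
  unfolding below_def using not_olt olt_not_le by blast

lemma disj:
  assumes S: "\<forall>\<alpha>\<in>acc k. s \<alpha> \<subseteq> below k \<alpha> \<and> (\<forall>\<beta>. olt k \<beta> \<alpha> \<longrightarrow> (\<exists>\<gamma>\<in>s \<alpha>. (\<beta>, \<gamma>) \<in> k))"
    and CD: "C \<inter> D = {}"
  shows "FF k s C \<inter> FF k s D = {}"
proof (rule ccontr)
  assume "FF k s C \<inter> FF k s D \<noteq> {}"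
  then obtain \<alpha> b1 b2 where a: "\<alpha> \<in> acc k" and b1: "olt k b1 \<alpha>" "s \<alpha> - below k b1 \<subseteq> C"
    and b2: "olt k b2 \<alpha>" "s \<alpha> - below k b2 \<subseteq> D" unfolding FF_def by blast
  have key: "\<And>m. (b1,m) \<in> k \<Longrightarrow> (b2,m) \<in> k \<Longrightarrow> olt k m \<alpha> \<Longrightarrow> False"
  proof -
    fix m assume m: "(b1,m) \<in> k" "(b2,m) \<in> k" "olt k m \<alpha>"
    then obtain g where g: "g \<in> s \<alpha>" "(m,g) \<in> k" using S a by blast
    have "g \<notin> below k b1" using m g trns below_iff by blast
    moreover have "g \<notin> below k b2" using m g trns below_iff by blast
    ultimately show False using g b1 b2 CD by blast
  qed
  show False
  proof (cases "(b1,b2) \<in> k")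
    case True thus ?thesis using key[of b2] rfl b2 by blast
  next
    case False thus ?thesis using key[of b1] rfl b1 tot by blast
  qed
qed

lemma bdd:
  assumes S: "\<forall>\<alpha>\<in>acc k. s \<alpha> \<subseteq> below k \<alpha> \<and> (\<forall>\<beta>. olt k \<beta> \<alpha> \<longrightarrow> (\<exists>\<gamma>\<in>s \<alpha>. (\<beta>, \<gamma>) \<in> k))"
    and B: "B - B' \<subseteq> below k g" and gg: "olt k g g'"
  shows "FF k s B - FF k s B' \<subseteq> below k g'"
proof
  fix \<alpha> assume "\<alpha> \<in> FF k s B - FF k s B'"
  then obtain b where a: "\<alpha> \<in> acc k" and b: "olt k b \<alpha>" "s \<alpha> - below k b \<subseteq> B"
    and n: "\<alpha> \<notin> FF k s B'" unfolding FF_def by blast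
  show "\<alpha> \<in> below k g'"
  proof (rule ccontr)
    assume "\<alpha> \<notin> below k g'"
    hence "(g',\<alpha>) \<in> k" using below_iff by blast
    hence ga: "olt k g \<alpha>" using gg olt_le by blast
    have key: "\<And>m. (b,m) \<in> k \<Longrightarrow> (g,m) \<in> k \<Longrightarrow> olt k m \<alpha> \<Longrightarrow> False"
    proof -
      fix m assume m: "(b,m) \<in> k" "(g,m) \<in> k" "olt k m \<alpha>"
      have "s \<alpha> - below k m \<subseteq> B'"
      proof
        fix x assume x: "x \<in> s \<alpha> - below k m"
        hence "(m,x) \<in> k" using below_iff by blast
        hence "x \<notin> below k b" "x \<notin> below k g" using m trns below_iff by blast+
        thus "x \<in> B'" using x b B by blast
      qed
      thus False using n a m unfolding FF_def by blast
    qed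
    show False
    proof (cases "(b,g) \<in> k")
      case True thus ?thesis using key[of g] rfl ga by blast
    next
      case False thus ?thesis using key[of b] rfl b tot by blast
    qed
  qed
qed

end

theorem theorem2p31:
  fixes k :: "'a rel" and J :: "'a set set" and \<eta> :: "'b rel"
  assumes "card_order k" and "regularCard k" and "\<not> countable (Field k)"
    and "is_ideal k J" and "kappa_complete k J" and "NS k \<subseteq> J"
    and "Well_order \<eta>" and "infinite (Field \<eta>)"
    and "clubsuit_ev k J"
  shows "(below_depth_desc k \<eta> \<longrightarrow> (\<exists>A :: 'b \<Rightarrow> 'a set. desc_tower J (I_bd k) \<eta> A)) \<and>
         (below_depth_asc k \<eta> \<longrightarrow> (\<exists>A :: 'b \<Rightarrow> 'a set. asc_tower J (I_bd k) \<eta> A))"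
proof -
  have FU: "Field k = UNIV" using assms(1) card_order_on_Card_order by blast
  have CO: "Card_order k" using assms(1) card_order_on_Card_order by blast
  have inf: "\<not> finite (Field k)" using assms(3) countable_finite by blast
  have wo: "well_order_on UNIV k" using assms(1) card_order_on_well_order_on by blast
  have lo: "refl_on UNIV k" "trans k" "antisym k" "total_on UNIV k"
    using wo unfolding well_order_on_def linear_order_on_def partial_order_on_def preorder_on_def
    by simp_all
  have l1: "(x,y) \<in> k \<or> (y,x) \<in> k" for x y
  proof (cases "x = y")
    case True thus ?thesis using refl_onD[OF lo(1)] by simp
  next
    case False thus ?thesis using lo(4) unfolding total_on_def by simp
  qed
  have l2: "(x,y) \<in> k \<Longrightarrow> (y,x) \<in> k \<Longrightarrow> x = y" for x y
    using lo(3) antisymD by metis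
  have l3: "(x,y) \<in> k \<Longrightarrow> (y,z) \<in> k \<Longrightarrow> (x,z) \<in> k" for x y z
    using lo(2) transD by metis
  have l4: "(x,x) \<in> k" for x using refl_onD[OF lo(1)] by simp
  have l5: "\<exists>y. olt k x y" for x
  proof -
    obtain b where "b \<in> Field k" "x \<noteq> b" "(x,b) \<in> k"
      using infinite_Card_order_limit[OF CO inf, of x] FU by auto
    thus ?thesis unfolding olt_def by blast
  qed
  interpret lin k
    by (rule lin.intro) (fact l1 l2 l3 l4 l5)+
  have card: "|A| =o k" if nb: "\<not> bounded_in k A" for A
  proof -
    have "cofinal A k" unfolding cofinal_def
    proof
      fix a assume "a \<in> Field k"
      obtain i where i: "olt k a i" using nomax by blast
      then obtain b where b: "b \<in> A" "\<not> olt k b i" using nb unfolding bounded_in_def below_def by blast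
      hence "olt k a b" using i olt_le not_olt by blast
      thus "\<exists>b\<in>A. a \<noteq> b \<and> (a, b) \<in> k" using b unfolding olt_def by blast
    qed
    thus ?thesis using assms(2) FU unfolding regularCard_def by blast
  qed
  obtain s where S: "\<forall>\<alpha>\<in>acc k. s \<alpha> \<subseteq> below k \<alpha> \<and> (\<forall>\<beta>. olt k \<beta> \<alpha> \<longrightarrow> (\<exists>\<gamma>\<in>s \<alpha>. (\<beta>, \<gamma>) \<in> k))"
    and S2: "\<forall>A. |A| =o k \<longrightarrow> FF k s A \<notin> J"
    using assms(9) unfolding clubsuit_ev_def FF_def by blast
  have sub: "B \<in> J" if "B \<subseteq> A" "A \<in> J" for A B using assms(4) that unfolding is_ideal_def by blast
  have pos: "FF k s B \<notin> J" if bb: "B \<notin> I_bd k" for B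
  proof -
    have "\<not> bounded_in k B" using bb unfolding I_bd_def by simp
    thus ?thesis using S2 card by blast
  qed
  have diffpos: "FF k s B - FF k s B' \<notin> J" if bb: "B - B' \<notin> I_bd k" for B B'
  proof
    assume "FF k s B - FF k s B' \<in> J"
    moreover have "FF k s (B - B') \<subseteq> FF k s B - FF k s B'"
    proof -
      have "FF k s (B - B') \<inter> FF k s B' = {}" by (rule disj[OF S]) blast
      moreover have "FF k s (B - B') \<subseteq> FF k s B" unfolding FF_def by blast
      ultimately show ?thesis by blast
    qed
    ultimately have "FF k s (B - B') \<in> J" using sub by blast
    thus False using pos bb by blast
  qed
  have diffbd: "FF k s B - FF k s B' \<in> I_bd k" if bb: "B - B' \<in> I_bd k" for B B'
  proof -
    obtain g where g: "B - B' \<subseteq> below k g" using bb unfolding I_bd_def bounded_in_def by blast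
    obtain g' where "olt k g g'" using nomax by blast
    thus ?thesis using bdd[OF S g] unfolding I_bd_def bounded_in_def by blast
  qed
  have rf: "\<eta> \<le>o \<eta>" using assms(7) ordLeq_reflexive by blast
  show ?thesis
  proof safe
    assume "below_depth_desc k \<eta>"
    then obtain B where B: "desc_tower (I_bd k) (I_bd k) \<eta> B"
      using rf assms(7) unfolding below_depth_desc_def by blast
    have "desc_tower J (I_bd k) \<eta> (\<lambda>x. FF k s (B x))"
      using B unfolding desc_tower_def
      by (intro conjI ballI impI; (elim conjE)?) (simp add: pos, simp add: diffbd, simp add: diffpos)
    thus "\<exists>A. desc_tower J (I_bd k) \<eta> A" by blast
  next
    assume "below_depth_asc k \<eta>"
    then obtain B where B: "asc_tower (I_bd k) (I_bd k) \<eta> B"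
      using rf assms(7) unfolding below_depth_asc_def by blast
    have "asc_tower J (I_bd k) \<eta> (\<lambda>x. FF k s (B x))"
      using B unfolding asc_tower_def
      by (intro conjI ballI impI; (elim conjE)?) (simp add: pos, simp add: diffbd, simp add: diffpos)
    thus "\<exists>A. asc_tower J (I_bd k) \<eta> A" by blast
  qed
qed

end
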